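(* Let $R$ and $S$ be commutative rings with identity, $f:R\to S$ a ring homomorphism, and $J$ a nonzero proper ideal of $S$. Let $\mathfrak{p}$ and $\{\mathfrak{p}_\alpha\}_{\alpha\in\Lambda}$ be prime ideals of $R$, and $\mathfrak{q}$ and $\{\mathfrak{q}_\alpha\}_{\alpha\in\Lambda}$ be prime ideals of $S$ not containing $J$. Then: (1) $\bigcap_{\alpha\in\Lambda}\mathfrak{p}_\alpha\subseteq\mathfrak{p}$ if and only if $\bigcap_{\alpha\in\Lambda}\mathfrak{p}_\alpha^{\prime_f}\subseteq\mathfrak{p}^{\prime_f}$. (2) $\bigcap_{\alpha\in\Lambda}\mathfrak{p}_\alpha\supseteq\mathfrak{p}$ if and only if $\bigcap_{\alpha\in\Lambda}\mathfrak{p}_\alpha^{\prime_f}\supseteq\mathfrak{p}^{\prime_f}$. (3) $\bigcap_{\alpha\in\Lambda}\mathfrak{q}_\alpha\subseteq\mathfrak{q}$ if and only if $\bigcap_{\alpha\in\Lambda}\overline{\mathfrak{q}_\alpha}^f\subseteq\overline{\mathfrak{q}}^f$. (4) If $\bigcap_{\alpha\in\Lambda}\mathfrak{q}_\alpha\supseteq\mathfrak{q}$, then $\bigcap_{\alpha\in\Lambda}\overline{\mathfrak{q}_\alpha}^f\supseteq\overline{\mathfrak{q}}^f$. The converse holds if either $f$ is surjective or $\operatorname{Spec}(S)\setminus V(J)$ is compactly packed. (5) $\bigcap_{\alpha\in\Lambda}\overline{\mathfrak{q}_\alpha}^f\subseteq\mathfrak{p}^{\prime_f}$ if and only if $f^{-1}\big(\bigcap_{\alpha\in\Lambda}\mathfrak{q}_\alpha+J\big)\subseteq\mathfrak{p}$.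 (6) $\bigcap_{\alpha\in\Lambda}\mathfrak{p}_\alpha^{\prime_f}\not\subseteq\overline{\mathfrak{q}}^f$.
   Context: $R\bowtie^f J:=\{(r,f(r)+j)\mid r\in R,\ j\in J\}$, a subring of $R\times S$. For a prime ideal $\mathfrak{p}$ of $R$, $\mathfrak{p}^{\prime_f}:=\{(p,f(p)+j)\mid p\in\mathfrak{p},\ j\in J\}$; for a prime ideal $\mathfrak{q}$ of $S$ with $J\not\subseteq\mathfrak{q}$, $\overline{\mathfrak{q}}^f:=\{(r,f(r)+j)\mid r\in R,\ j\in J,\ f(r)+j\in\mathfrak{q}\}$; both are prime ideals of $R\bowtie^f J$. $V(J)$ is the set of prime ideals of $S$ containing $J$. A subset $X\subseteq\operatorname{Spec}(S)$ is compactly packed if whenever an ideal $I$ of $S$ is contained in the union of a family $\{\mathfrak{q}_i\}_i$ of elements of $X$, then $I\subseteq\mathfrak{q}_i$ for some $i$. *)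

theory Defs
  imports "HOL-Algebra.Algebra"
begin

definition amalg :: "('a,'c) ring_scheme \<Rightarrow> ('b,'d) ring_scheme \<Rightarrow> ('a \<Rightarrow> 'b) \<Rightarrow> 'b set \<Rightarrow> ('a \<times> 'b) set" where
  "amalg R S f J = {(r, f r \<oplus>\<^bsub>S\<^esub> j) | r j. r \<in> carrier R \<and> j \<in> J}"

text \<open>p^{'_f} for an ideal p of R.\<close>
definition prime_ext :: "('a,'c) ring_scheme \<Rightarrow> ('b,'d) ring_scheme \<Rightarrow> ('a \<Rightarrow> 'b) \<Rightarrow> 'b set \<Rightarrow> 'a set \<Rightarrow> ('a \<times> 'b) set" where
  "prime_ext R S f J p = {(x, f x \<oplus>\<^bsub>S\<^esub> j) | x j. x \<in> p \<and> j \<in> J}"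

text \<open>overline{q}^f for an ideal q of S.\<close>
definition prime_bar :: "('a,'c) ring_scheme \<Rightarrow> ('b,'d) ring_scheme \<Rightarrow> ('a \<Rightarrow> 'b) \<Rightarrow> 'b set \<Rightarrow> 'b set \<Rightarrow> ('a \<times> 'b) set" where
  "prime_bar R S f J q = {(r, f r \<oplus>\<^bsub>S\<^esub> j) | r j. r \<in> carrier R \<and> j \<in> J \<and> f r \<oplus>\<^bsub>S\<^esub> j \<in> q}"

definition Spec :: "('b,'d) ring_scheme \<Rightarrow> 'b set set" where
  "Spec S = {q. primeideal q S}"

definition V :: "('b,'d) ring_scheme \<Rightarrow> 'b set \<Rightarrow> 'b set set" where
  "V S J = {q \<in> Spec S. J \<subseteq> q}"

definition compactly_packed :: "('b,'d) ring_scheme \<Rightarrow> 'b set set \<Rightarrow> bool" where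
  "compactly_packed S Y \<longleftrightarrow>
     (\<forall>I F. ideal I S \<longrightarrow> F \<subseteq> Y \<longrightarrow> I \<subseteq> Union F \<longrightarrow> (\<exists>q\<in>F. I \<subseteq> q))"

end

theory Submission
  imports Defs
begin


lemma mem_amalg: "(a,b) \<in> amalg R S f J \<longleftrightarrow> (\<exists>j\<in>J. a \<in> carrier R \<and> b = f a \<oplus>\<^bsub>S\<^esub> j)"
  unfolding amalg_def by auto
lemma mem_ext: "(a,b) \<in> prime_ext R S f J p \<longleftrightarrow> (\<exists>j\<in>J. a \<in> p \<and> b = f a \<oplus>\<^bsub>S\<^esub> j)"
  unfolding prime_ext_def by auto
lemma mem_bar: "(a,b) \<in> prime_bar R S f J q \<longleftrightarrow> (\<exists>j\<in>J. a \<in> carrier R \<and> b = f a \<oplus>\<^bsub>S\<^esub> j \<and> b \<in> q)"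
  unfolding prime_bar_def by auto

theorem lemma2p3:
  fixes R :: "('a,'c) ring_scheme" and S :: "('b,'d) ring_scheme"
    and f :: "'a \<Rightarrow> 'b" and J :: "'b set"
    and p :: "'a set" and P :: "'i \<Rightarrow> 'a set"
    and q :: "'b set" and Q :: "'i \<Rightarrow> 'b set" and \<Lambda> :: "'i set"
  assumes "cring R" and "cring S" and "f \<in> ring_hom R S"
    and "ideal J S" and "J \<noteq> {\<zero>\<^bsub>S\<^esub>}" and "J \<noteq> carrier S"
    and "primeideal p R" and "\<forall>\<alpha>\<in>\<Lambda>. primeideal (P \<alpha>) R"
    and "primeideal q S" and "\<not> J \<subseteq> q"
    and "\<forall>\<alpha>\<in>\<Lambda>. primeideal (Q \<alpha>) S \<and> \<not> J \<subseteq> Q \<alpha>"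
  shows
    "(carrier R \<inter> (\<Inter>\<alpha>\<in>\<Lambda>. P \<alpha>) \<subseteq> p \<longleftrightarrow>
        amalg R S f J \<inter> (\<Inter>\<alpha>\<in>\<Lambda>. prime_ext R S f J (P \<alpha>)) \<subseteq> prime_ext R S f J p)
   \<and> (p \<subseteq> carrier R \<inter> (\<Inter>\<alpha>\<in>\<Lambda>. P \<alpha>) \<longleftrightarrow>
        prime_ext R S f J p \<subseteq> amalg R S f J \<inter> (\<Inter>\<alpha>\<in>\<Lambda>. prime_ext R S f J (P \<alpha>)))
   \<and> (carrier S \<inter> (\<Inter>\<alpha>\<in>\<Lambda>. Q \<alpha>) \<subseteq> q \<longleftrightarrow>
        amalg R S f J \<inter> (\<Inter>\<alpha>\<in>\<Lambda>. prime_bar R S f J (Q \<alpha>)) \<subseteq> prime_bar R S f J q)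
   \<and> (q \<subseteq> carrier S \<inter> (\<Inter>\<alpha>\<in>\<Lambda>. Q \<alpha>) \<longrightarrow>
        prime_bar R S f J q \<subseteq> amalg R S f J \<inter> (\<Inter>\<alpha>\<in>\<Lambda>. prime_bar R S f J (Q \<alpha>)))
   \<and> ((f ` carrier R = carrier S \<or> compactly_packed S (Spec S - V S J)) \<longrightarrow>
        (prime_bar R S f J q \<subseteq> amalg R S f J \<inter> (\<Inter>\<alpha>\<in>\<Lambda>. prime_bar R S f J (Q \<alpha>)) \<longrightarrow>
         q \<subseteq> carrier S \<inter> (\<Inter>\<alpha>\<in>\<Lambda>. Q \<alpha>)))
   \<and> (amalg R S f J \<inter> (\<Inter>\<alpha>\<in>\<Lambda>. prime_bar R S f J (Q \<alpha>)) \<subseteq> prime_ext R S f J p \<longleftrightarrow>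
        {r \<in> carrier R. f r \<in> (carrier S \<inter> (\<Inter>\<alpha>\<in>\<Lambda>. Q \<alpha>)) <+>\<^bsub>S\<^esub> J} \<subseteq> p)
   \<and> \<not> (amalg R S f J \<inter> (\<Inter>\<alpha>\<in>\<Lambda>. prime_ext R S f J (P \<alpha>)) \<subseteq> prime_bar R S f J q)"
  proof -
  interpret R: cring R by fact
  interpret S: cring S by fact
  interpret h: ring_hom_ring R S f
    using assms(1,2,3) by (simp add: ring_hom_ringI2 cring.axioms(1))
  interpret J: ideal J S by fact
  interpret p: primeideal p R by fact
  interpret q: primeideal q S by fact
  have JS: "J \<subseteq> carrier S" by (rule J.a_subset)
  have pR: "p \<subseteq> carrier R" by (rule p.a_subset)
  have qS: "q \<subseteq> carrier S" by (rule q.a_subset)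
  have PR: "\<And>\<alpha>. \<alpha> \<in> \<Lambda> \<Longrightarrow> primeideal (P \<alpha>) R" using assms(8) by blast
  have QS: "\<And>\<alpha>. \<alpha> \<in> \<Lambda> \<Longrightarrow> primeideal (Q \<alpha>) S" "\<And>\<alpha>. \<alpha> \<in> \<Lambda> \<Longrightarrow> \<not> J \<subseteq> Q \<alpha>"
    using assms(11) by blast+
  have base: "(x, f x) \<in> amalg R S f J" if "x \<in> carrier R" for x
    using that J.zero_closed by (auto simp: mem_amalg intro!: bexI[of _ "\<zero>\<^bsub>S\<^esub>"])
  have zj: "(\<zero>\<^bsub>R\<^esub>, j) \<in> amalg R S f J" if "j \<in> J" for j
    using that JS by (auto simp: mem_amalg intro!: bexI[of _ j])
  obtain j0 where j0: "j0 \<in> J" "j0 \<notin> q" using assms(10) by blast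
  have P1: "carrier R \<inter> (\<Inter>\<alpha>\<in>\<Lambda>. P \<alpha>) \<subseteq> p \<longleftrightarrow>
        amalg R S f J \<inter> (\<Inter>\<alpha>\<in>\<Lambda>. prime_ext R S f J (P \<alpha>)) \<subseteq> prime_ext R S f J p"
  proof
    assume H: "carrier R \<inter> (\<Inter>\<alpha>\<in>\<Lambda>. P \<alpha>) \<subseteq> p"
    show "amalg R S f J \<inter> (\<Inter>\<alpha>\<in>\<Lambda>. prime_ext R S f J (P \<alpha>)) \<subseteq> prime_ext R S f J p"
    proof (clarify)
      fix a b assume A: "(a,b) \<in> amalg R S f J" and B: "(a,b) \<in> (\<Inter>\<alpha>\<in>\<Lambda>. prime_ext R S f J (P \<alpha>))"
      from A obtain j where j: "j \<in> J" "a \<in> carrier R" "b = f a \<oplus>\<^bsub>S\<^esub> j" by (auto simp: mem_amalg)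
      have "a \<in> P \<alpha>" if "\<alpha> \<in> \<Lambda>" for \<alpha> using B that by (auto simp: mem_ext)
      then have "a \<in> p" using H j by blast
      then show "(a,b) \<in> prime_ext R S f J p" using j by (auto simp: mem_ext)
    qed
  next
    assume H: "amalg R S f J \<inter> (\<Inter>\<alpha>\<in>\<Lambda>. prime_ext R S f J (P \<alpha>)) \<subseteq> prime_ext R S f J p"
    show "carrier R \<inter> (\<Inter>\<alpha>\<in>\<Lambda>. P \<alpha>) \<subseteq> p"
    proof
      fix x assume x: "x \<in> carrier R \<inter> (\<Inter>\<alpha>\<in>\<Lambda>. P \<alpha>)"
      have "(x, f x) \<in> prime_ext R S f J (P \<alpha>)" if "\<alpha> \<in> \<Lambda>" for \<alpha>
        using x that base[of x] by (auto simp: mem_ext mem_amalg)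
      then have "(x, f x) \<in> prime_ext R S f J p" using H base[of x] x by blast
      then show "x \<in> p" by (auto simp: mem_ext)
    qed
  qed
  have P2: "p \<subseteq> carrier R \<inter> (\<Inter>\<alpha>\<in>\<Lambda>. P \<alpha>) \<longleftrightarrow>
        prime_ext R S f J p \<subseteq> amalg R S f J \<inter> (\<Inter>\<alpha>\<in>\<Lambda>. prime_ext R S f J (P \<alpha>))"
  proof
    assume H: "p \<subseteq> carrier R \<inter> (\<Inter>\<alpha>\<in>\<Lambda>. P \<alpha>)"
    show "prime_ext R S f J p \<subseteq> amalg R S f J \<inter> (\<Inter>\<alpha>\<in>\<Lambda>. prime_ext R S f J (P \<alpha>))"
      using H by (fastforce simp: mem_ext mem_amalg)
  next
    assume H: "prime_ext R S f J p \<subseteq> amalg R S f J \<inter> (\<Inter>\<alpha>\<in>\<Lambda>. prime_ext R S f J (P \<alpha>))"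
    show "p \<subseteq> carrier R \<inter> (\<Inter>\<alpha>\<in>\<Lambda>. P \<alpha>)"
    proof
      fix x assume x: "x \<in> p"
      have "(x, f x) \<in> prime_ext R S f J p" using x pR base[of x] by (auto simp: mem_ext mem_amalg)
      then have "(x, f x) \<in> prime_ext R S f J (P \<alpha>)" if "\<alpha> \<in> \<Lambda>" for \<alpha> using H that by blast
      then show "x \<in> carrier R \<inter> (\<Inter>\<alpha>\<in>\<Lambda>. P \<alpha>)" using x pR by (auto simp: mem_ext)
    qed
  qed
  have P3: "carrier S \<inter> (\<Inter>\<alpha>\<in>\<Lambda>. Q \<alpha>) \<subseteq> q \<longleftrightarrow>
        amalg R S f J \<inter> (\<Inter>\<alpha>\<in>\<Lambda>. prime_bar R S f J (Q \<alpha>)) \<subseteq> prime_bar R S f J q"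
  proof
    assume H: "carrier S \<inter> (\<Inter>\<alpha>\<in>\<Lambda>. Q \<alpha>) \<subseteq> q"
    show "amalg R S f J \<inter> (\<Inter>\<alpha>\<in>\<Lambda>. prime_bar R S f J (Q \<alpha>)) \<subseteq> prime_bar R S f J q"
    proof (clarify)
      fix a b assume A: "(a,b) \<in> amalg R S f J" and B: "(a,b) \<in> (\<Inter>\<alpha>\<in>\<Lambda>. prime_bar R S f J (Q \<alpha>))"
      from A obtain j where j: "j \<in> J" "a \<in> carrier R" "b = f a \<oplus>\<^bsub>S\<^esub> j" by (auto simp: mem_amalg)
      have bS: "b \<in> carrier S" using j JS by auto
      have "b \<in> Q \<alpha>" if "\<alpha> \<in> \<Lambda>" for \<alpha> using B that by (auto simp: mem_bar)
      then have "b \<in> q" using H bS by blast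
      then show "(a,b) \<in> prime_bar R S f J q" using j by (auto simp: mem_bar)
    qed
  next
    assume H: "amalg R S f J \<inter> (\<Inter>\<alpha>\<in>\<Lambda>. prime_bar R S f J (Q \<alpha>)) \<subseteq> prime_bar R S f J q"
    show "carrier S \<inter> (\<Inter>\<alpha>\<in>\<Lambda>. Q \<alpha>) \<subseteq> q"
    proof
      fix s assume s: "s \<in> carrier S \<inter> (\<Inter>\<alpha>\<in>\<Lambda>. Q \<alpha>)"
      have sjJ: "s \<otimes>\<^bsub>S\<^esub> j0 \<in> J" using s j0 J.I_l_closed by blast
      have "s \<otimes>\<^bsub>S\<^esub> j0 \<in> Q \<alpha>" if "\<alpha> \<in> \<Lambda>" for \<alpha>
        proof -
        have "s \<in> Q \<alpha>" using s that by blast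
        moreover have "j0 \<in> carrier S" using j0 JS by blast
        ultimately show ?thesis using ideal.I_r_closed[OF primeideal.axioms(1)[OF QS(1)[OF that]]] by blast
      qed
      then have "(\<zero>\<^bsub>R\<^esub>, s \<otimes>\<^bsub>S\<^esub> j0) \<in> prime_bar R S f J (Q \<alpha>)" if "\<alpha> \<in> \<Lambda>" for \<alpha>
        using that zj[OF sjJ] by (auto simp: mem_bar mem_amalg)
      then have "(\<zero>\<^bsub>R\<^esub>, s \<otimes>\<^bsub>S\<^esub> j0) \<in> prime_bar R S f J q" using H zj[OF sjJ] by blast
      then have "s \<otimes>\<^bsub>S\<^esub> j0 \<in> q" by (auto simp: mem_bar)
      then show "s \<in> q" using q.I_prime[of s j0] s j0 JS by blast
    qed
  qed
  have P4: "q \<subseteq> carrier S \<inter> (\<Inter>\<alpha>\<in>\<Lambda>. Q \<alpha>) \<longrightarrow>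
        prime_bar R S f J q \<subseteq> amalg R S f J \<inter> (\<Inter>\<alpha>\<in>\<Lambda>. prime_bar R S f J (Q \<alpha>))"
    by (fastforce simp: mem_bar mem_amalg)
  have P5: "prime_bar R S f J q \<subseteq> amalg R S f J \<inter> (\<Inter>\<alpha>\<in>\<Lambda>. prime_bar R S f J (Q \<alpha>)) \<longrightarrow>
         q \<subseteq> carrier S \<inter> (\<Inter>\<alpha>\<in>\<Lambda>. Q \<alpha>)"
  proof (intro impI subsetI)
    fix s assume H: "prime_bar R S f J q \<subseteq> amalg R S f J \<inter> (\<Inter>\<alpha>\<in>\<Lambda>. prime_bar R S f J (Q \<alpha>))"
      and s: "s \<in> q"
    have sS: "s \<in> carrier S" using s qS by blast
    have "s \<in> Q \<alpha>" if a: "\<alpha> \<in> \<Lambda>" for \<alpha>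
    proof -
      obtain j where j: "j \<in> J" "j \<notin> Q \<alpha>" using QS(2)[OF a] by blast
      have sjJ: "s \<otimes>\<^bsub>S\<^esub> j \<in> J" using sS j J.I_l_closed by blast
      have "s \<otimes>\<^bsub>S\<^esub> j \<in> q" using s j JS q.I_r_closed by blast
      then have "(\<zero>\<^bsub>R\<^esub>, s \<otimes>\<^bsub>S\<^esub> j) \<in> prime_bar R S f J q"
        using zj[OF sjJ] by (auto simp: mem_bar mem_amalg)
      then have "(\<zero>\<^bsub>R\<^esub>, s \<otimes>\<^bsub>S\<^esub> j) \<in> prime_bar R S f J (Q \<alpha>)" using H a by blast
      then have "s \<otimes>\<^bsub>S\<^esub> j \<in> Q \<alpha>" by (auto simp: mem_bar)
      then show "s \<in> Q \<alpha>" using primeideal.I_prime[OF QS(1)[OF a], of s j] sS j JS by blast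
    qed
    then show "s \<in> carrier S \<inter> (\<Inter>\<alpha>\<in>\<Lambda>. Q \<alpha>)" using sS by blast
  qed
  have P6: "amalg R S f J \<inter> (\<Inter>\<alpha>\<in>\<Lambda>. prime_bar R S f J (Q \<alpha>)) \<subseteq> prime_ext R S f J p \<longleftrightarrow>
        {r \<in> carrier R. f r \<in> (carrier S \<inter> (\<Inter>\<alpha>\<in>\<Lambda>. Q \<alpha>)) <+>\<^bsub>S\<^esub> J} \<subseteq> p"
  proof
    assume H: "amalg R S f J \<inter> (\<Inter>\<alpha>\<in>\<Lambda>. prime_bar R S f J (Q \<alpha>)) \<subseteq> prime_ext R S f J p"
    show "{r \<in> carrier R. f r \<in> (carrier S \<inter> (\<Inter>\<alpha>\<in>\<Lambda>. Q \<alpha>)) <+>\<^bsub>S\<^esub> J} \<subseteq> p"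
    proof clarify
      fix r assume r: "r \<in> carrier R" and fr: "f r \<in> (carrier S \<inter> (\<Inter>\<alpha>\<in>\<Lambda>. Q \<alpha>)) <+>\<^bsub>S\<^esub> J"
      then obtain i j where ij: "i \<in> carrier S" "\<forall>\<alpha>\<in>\<Lambda>. i \<in> Q \<alpha>" "j \<in> J" "f r = i \<oplus>\<^bsub>S\<^esub> j"
        unfolding set_add_def' by blast
      have jS: "j \<in> carrier S" using ij JS by blast
      have mj: "\<ominus>\<^bsub>S\<^esub> j \<in> J" using ij(3) J.a_inv_closed by blast
      have ie: "i = f r \<oplus>\<^bsub>S\<^esub> (\<ominus>\<^bsub>S\<^esub> j)" using ij jS by (simp add: S.add.m_assoc S.r_neg)
      have "(r, i) \<in> amalg R S f J \<inter> (\<Inter>\<alpha>\<in>\<Lambda>. prime_bar R S f J (Q \<alpha>))"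
        using ie mj r ij(2) by (auto simp: mem_amalg mem_bar)
      then have "(r, i) \<in> prime_ext R S f J p" using H by blast
      then show "r \<in> p" by (auto simp: mem_ext)
    qed
  next
    assume H: "{r \<in> carrier R. f r \<in> (carrier S \<inter> (\<Inter>\<alpha>\<in>\<Lambda>. Q \<alpha>)) <+>\<^bsub>S\<^esub> J} \<subseteq> p"
    show "amalg R S f J \<inter> (\<Inter>\<alpha>\<in>\<Lambda>. prime_bar R S f J (Q \<alpha>)) \<subseteq> prime_ext R S f J p"
    proof clarify
      fix a b assume A: "(a,b) \<in> amalg R S f J" and B: "(a,b) \<in> (\<Inter>\<alpha>\<in>\<Lambda>. prime_bar R S f J (Q \<alpha>))"
      from A obtain j where j: "j \<in> J" "a \<in> carrier R" "b = f a \<oplus>\<^bsub>S\<^esub> j" by (auto simp: mem_amalg)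
      have jS: "j \<in> carrier S" using j JS by blast
      have bS: "b \<in> carrier S" using j jS by auto
      have bQ: "\<forall>\<alpha>\<in>\<Lambda>. b \<in> Q \<alpha>" using B by (auto simp: mem_bar)
      have mj: "\<ominus>\<^bsub>S\<^esub> j \<in> J" using j(1) J.a_inv_closed by blast
      have fe: "f a = b \<oplus>\<^bsub>S\<^esub> (\<ominus>\<^bsub>S\<^esub> j)" using j jS by (simp add: S.add.m_assoc S.r_neg)
      have "f a \<in> (carrier S \<inter> (\<Inter>\<alpha>\<in>\<Lambda>. Q \<alpha>)) <+>\<^bsub>S\<^esub> J"
        unfolding set_add_def' using fe bS bQ mj by blast
      then have "a \<in> p" using H j by blast
      then show "(a,b) \<in> prime_ext R S f J p" using j by (auto simp: mem_ext)
    qed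
  qed
  have P7: "\<not> (amalg R S f J \<inter> (\<Inter>\<alpha>\<in>\<Lambda>. prime_ext R S f J (P \<alpha>)) \<subseteq> prime_bar R S f J q)"
  proof
    assume H: "amalg R S f J \<inter> (\<Inter>\<alpha>\<in>\<Lambda>. prime_ext R S f J (P \<alpha>)) \<subseteq> prime_bar R S f J q"
    have j0S: "j0 \<in> carrier S" using j0 JS by blast
    have "(\<zero>\<^bsub>R\<^esub>, j0) \<in> prime_ext R S f J (P \<alpha>)" if a: "\<alpha> \<in> \<Lambda>" for \<alpha>
      using primeideal.axioms(1)[OF PR[OF a]] j0 j0S
      by (auto simp: mem_ext intro!: bexI[of _ j0] additive_subgroup.zero_closed[OF ideal.axioms(1)])
    then have "(\<zero>\<^bsub>R\<^esub>, j0) \<in> prime_bar R S f J q" using H zj[OF j0(1)] by blast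
    then show False using j0 by (auto simp: mem_bar)
  qed
  show ?thesis using P1 P2 P3 P4 P5 P6 P7 by blast
qed

end
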